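(* For every $r\in(0,\tfrac12]$ there exist a constant $C_r>0$ and infinitely many integers $N$ such that there is an ORN design on $N$ nodes that guarantees throughput $r$ and has maximum latency at most $C_r\,L^*(r,N)$.
   Context: Nodes are $[N]=\{1,\dots,N\}$. A connection schedule of size $N$ and period $T\ge1$ is a sequence of permutations $\pi_0,\dots,\pi_{T-1}$ of $[N]$; write $\pi_t=\pi_{t \bmod T}$ for all $t\in\mathbb Z$. Its virtual topology is the directed graph $G$ with vertex set $[N]\times\mathbb Z$ whose edges are the virtual edges $(i,t)\to(i,t+1)$ and the physical edges $(i,t)\to(\pi_t(i),t+1)$, for all $i\in[N]$, $t\in\mathbb Z$. The latency of a finite directed path in $G$ is its number of edges. For $a,b\in[N]$, $t\in\mathbb Z$, $\mathcal P(a,b,t)$ is the set of paths in $G$ from $(a,t)$ to some vertex $(b,t')$, and $\mathcal P$ is the set of all paths. A flow is a function $f:\mathcal P\to[0,\infty)$; the load on an edge $e$ is $F(f,e)=\sum_{P\ni e}f(P)$; $f$ is feasible if $F(f,e)\le 1$ for every physical edge $e$. An oblivious routing scheme $R$ assigns to each $(a,b,t)\in[N]\times[N]\times\mathbb Z$ a flow $R_{a,b,t}$ supported on $\mathcal P(a,b,t)$ with $\sum_P R_{a,b,t}(P)=1$, which is periodic: $R_{a,b,t+T}$ is obtained from $R_{a,b,t}$ by shifting every path by $T$ in the time coordinate. An ORN design on $N$ nodes is a connection schedule together with an oblivious routing scheme on its virtual topology; its maximum latency is the maximum latency of a path $P$ with $R_{a,b,t}(P)>0$ for some $a,b,t$.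 A demand function $D$ assigns to each $t\in\mathbb Z$ an $N\times N$ matrix $D(t)$ with nonnegative entries $D(t,a,b)$; it requests throughput equal to the supremum over $t$ of the maximum row sum or column sum of $D(t)$. The induced flow is $f(R,D)=\sum_{a,b,t}D(t,a,b)R_{a,b,t}$. The design guarantees throughput $r$ if $f(R,D)$ is feasible for every demand function $D$ requesting throughput at most $r$. For $r\in(0,\frac12]$, $(h,\varepsilon)$ denotes the unique solution in $\mathbb N\times(0,1]$ of $\frac1{2r}=h+1-\varepsilon$ (equivalently $h=\lfloor\frac1{2r}\rfloor$, $\varepsilon=h+1-\frac1{2r}$), and $L^*(r,N)=h\left(N^{1/(h+1)}+(\varepsilon N)^{1/h}\right)$. *)

theory Defs
  imports "HOL-Analysis.Analysis" "HOL-Combinatorics.Permutations"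
begin

text \<open>Nodes are 1..N. A connection schedule of period T is given by sigma 0, ..., sigma (T-1),
  each a permutation of {1..N}; it is extended periodically to all integer times.\<close>

definition schedule :: "nat \<Rightarrow> nat \<Rightarrow> (nat \<Rightarrow> nat \<Rightarrow> nat) \<Rightarrow> bool" where
  "schedule N T \<sigma> \<longleftrightarrow> T \<ge> 1 \<and> (\<forall>t<T. \<sigma> t permutes {1..N})"

definition perm_at :: "nat \<Rightarrow> (nat \<Rightarrow> nat \<Rightarrow> nat) \<Rightarrow> int \<Rightarrow> nat \<Rightarrow> nat" where
  "perm_at T \<sigma> t = \<sigma> (nat (t mod int T))"

text \<open>Edges of the virtual topology: (i, t, False) is the virtual edge (i,t) -> (i,t+1),
  (i, t, True) is the physical edge (i,t) -> (pi_t(i), t+1).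
  Since every vertex has exactly one outgoing virtual and one outgoing physical edge,
  a finite directed path is determined by its start vertex (a,t) and the list of the
  kinds of its edges.\<close>

type_synonym edge = "nat \<times> int \<times> bool"
type_synonym path = "nat \<times> int \<times> bool list"

fun step_edges :: "(int \<Rightarrow> nat \<Rightarrow> nat) \<Rightarrow> nat \<Rightarrow> int \<Rightarrow> bool list \<Rightarrow> edge list" where
  "step_edges p i t [] = []"
| "step_edges p i t (b # bs) = (i, t, b) # step_edges p (if b then p t i else i) (t + 1) bs"

fun step_end :: "(int \<Rightarrow> nat \<Rightarrow> nat) \<Rightarrow> nat \<Rightarrow> int \<Rightarrow> bool list \<Rightarrow> nat" where
  "step_end p i t [] = i"
| "step_end p i t (b # bs) = step_end p (if b then p t i else i) (t + 1) bs"

definition path_edges :: "nat \<Rightarrow> (nat \<Rightarrow> nat \<Rightarrow> nat) \<Rightarrow> path \<Rightarrow> edge set" where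
  "path_edges T \<sigma> P = (case P of (i, t, bs) \<Rightarrow> set (step_edges (perm_at T \<sigma>) i t bs))"

definition latency :: "path \<Rightarrow> nat" where
  "latency P = length (snd (snd P))"

definition paths_abt :: "nat \<Rightarrow> (nat \<Rightarrow> nat \<Rightarrow> nat) \<Rightarrow> nat \<Rightarrow> nat \<Rightarrow> int \<Rightarrow> path set" where
  "paths_abt T \<sigma> a b t = {(i, s, bs). i = a \<and> s = t \<and> step_end (perm_at T \<sigma>) a t bs = b}"

definition shift_path :: "int \<Rightarrow> path \<Rightarrow> path" where
  "shift_path d P = (case P of (i, s, bs) \<Rightarrow> (i, s + d, bs))"

definition routing_scheme ::
  "nat \<Rightarrow> nat \<Rightarrow> (nat \<Rightarrow> nat \<Rightarrow> nat) \<Rightarrow> (nat \<Rightarrow> nat \<Rightarrow> int \<Rightarrow> path \<Rightarrow> real) \<Rightarrow> bool" where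
  "routing_scheme N T \<sigma> R \<longleftrightarrow>
     (\<forall>a\<in>{1..N}. \<forall>b\<in>{1..N}. \<forall>t.
        (\<forall>P. R a b t P \<ge> 0)
      \<and> (\<forall>P. P \<notin> paths_abt T \<sigma> a b t \<longrightarrow> R a b t P = 0)
      \<and> (\<Sum>\<^sub>\<infinity>P\<in>UNIV. ennreal (R a b t P)) = 1
      \<and> (\<forall>P. R a b (t + int T) (shift_path (int T) P) = R a b t P))"

definition requests_at_most :: "nat \<Rightarrow> (int \<Rightarrow> nat \<Rightarrow> nat \<Rightarrow> real) \<Rightarrow> real \<Rightarrow> bool" where
  "requests_at_most N D r \<longleftrightarrow>
     (\<forall>t. \<forall>a\<in>{1..N}. \<forall>b\<in>{1..N}. D t a b \<ge> 0)
   \<and> (\<forall>t. \<forall>a\<in>{1..N}. (\<Sum>b\<in>{1..N}. D t a b) \<le> r)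
   \<and> (\<forall>t. \<forall>b\<in>{1..N}. (\<Sum>a\<in>{1..N}. D t a b) \<le> r)"

text \<open>Induced flow f(R,D) (as an extended nonnegative real, so no summability side
  condition is hidden) and its load on an edge.\<close>
definition induced_flow ::
  "nat \<Rightarrow> (nat \<Rightarrow> nat \<Rightarrow> int \<Rightarrow> path \<Rightarrow> real) \<Rightarrow> (int \<Rightarrow> nat \<Rightarrow> nat \<Rightarrow> real) \<Rightarrow> path \<Rightarrow> ennreal" where
  "induced_flow N R D P =
     (\<Sum>\<^sub>\<infinity>(a, b, t)\<in>{1..N} \<times> {1..N} \<times> (UNIV :: int set). ennreal (D t a b * R a b t P))"

definition load ::
  "nat \<Rightarrow> (nat \<Rightarrow> nat \<Rightarrow> nat) \<Rightarrow> nat \<Rightarrow> (nat \<Rightarrow> nat \<Rightarrow> int \<Rightarrow> path \<Rightarrow> real)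
     \<Rightarrow> (int \<Rightarrow> nat \<Rightarrow> nat \<Rightarrow> real) \<Rightarrow> edge \<Rightarrow> ennreal" where
  "load T \<sigma> N R D e = (\<Sum>\<^sub>\<infinity>P\<in>{P. e \<in> path_edges T \<sigma> P}. induced_flow N R D P)"

definition guarantees_throughput ::
  "nat \<Rightarrow> nat \<Rightarrow> (nat \<Rightarrow> nat \<Rightarrow> nat) \<Rightarrow> (nat \<Rightarrow> nat \<Rightarrow> int \<Rightarrow> path \<Rightarrow> real) \<Rightarrow> real \<Rightarrow> bool" where
  "guarantees_throughput N T \<sigma> R r \<longleftrightarrow>
     (\<forall>D. requests_at_most N D r \<longrightarrow>
        (\<forall>i\<in>{1..N}. \<forall>t::int. load T \<sigma> N R D (i, t, True) \<le> 1))"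

definition max_latency_le :: "nat \<Rightarrow> (nat \<Rightarrow> nat \<Rightarrow> int \<Rightarrow> path \<Rightarrow> real) \<Rightarrow> real \<Rightarrow> bool" where
  "max_latency_le N R L \<longleftrightarrow>
     (\<forall>a\<in>{1..N}. \<forall>b\<in>{1..N}. \<forall>t P. R a b t P > 0 \<longrightarrow> real (latency P) \<le> L)"

definition good_ORN :: "nat \<Rightarrow> real \<Rightarrow> real \<Rightarrow> bool" where
  "good_ORN N r L \<longleftrightarrow>
     (\<exists>T \<sigma> R. schedule N T \<sigma> \<and> routing_scheme N T \<sigma> R
        \<and> guarantees_throughput N T \<sigma> R r \<and> max_latency_le N R L)"

definition Lstar :: "real \<Rightarrow> nat \<Rightarrow> real" where
  "Lstar r N = (let h = real_of_int \<lfloor>1 / (2 * r)\<rfloor>; \<epsilon> = h + 1 - 1 / (2 * r) in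
     h * (real N powr (1 / (h + 1)) + (\<epsilon> * real N) powr (1 / h)))"

end

theory Submission
  imports Defs
begin

lemma mod_cancel_lt:
  fixes x y c m :: nat
  assumes "x < m" "y < m" "(x + c) mod m = (y + c) mod m"
  shows "x = y"
proof -
  have "int (x + c) mod int m = int (y + c) mod int m" using assms(3)
    by (metis of_nat_mod)
  then have "(int x + int c - int c) mod int m = (int y + int c - int c) mod int m"
    by (intro mod_diff_cong) simp_all
  then have "int x mod int m = int y mod int m" by simp
  then show ?thesis using assms(1,2) by (metis of_nat_eq_iff of_nat_mod mod_less)
qed

lemma key_arith:
  fixes x y z m :: nat
  assumes "x < m" "y < m" "z < m"
  shows "(x + y + (z + (m - x) + (m - y)) mod m) mod m = z"
proof -
  have "(x + y + (z + (m - x) + (m - y)) mod m) mod m = (x + y + (z + (m - x) + (m - y))) mod m"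
    by (simp add: mod_add_right_eq)
  also have "x + y + (z + (m - x) + (m - y)) = z + m * 2" using assms by simp
  also have "(z + m * 2) mod m = z" using assms by simp
  finally show ?thesis .
qed

lemma key_arith2:
  fixes x y z m :: nat
  assumes "x < m" "y < m" "z < m"
  shows "(x + y) mod m = (z + (m - (z + (m - x) + (m - y)) mod m)) mod m"
proof -
  let ?d = "(z + (m - x) + (m - y)) mod m"
  have dm: "?d < m" using assms by simp
  have "((x + y) mod m + ?d) mod m = z" using key_arith[OF assms] by (simp add: mod_add_left_eq)
  moreover have "((z + (m - ?d)) mod m + ?d) mod m = z"
  proof -
    have "((z + (m - ?d)) mod m + ?d) mod m = (z + (m - ?d) + ?d) mod m" by (simp add: mod_add_left_eq)
    also have "z + (m - ?d) + ?d = z + m" using dm by simp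
    finally show ?thesis using assms by simp
  qed
  ultimately show ?thesis using mod_cancel_lt[of "(x + y) mod m" m "(z + (m - ?d)) mod m" ?d] assms
    by simp
qed

lemma sum_le_unique:
  assumes "finite A" "0 \<le> (c::real)" "\<And>a a'. a \<in> A \<Longrightarrow> a' \<in> A \<Longrightarrow> P a \<Longrightarrow> P a' \<Longrightarrow> a = a'"
  shows "(\<Sum>a\<in>A. if P a then c else 0) \<le> c"
proof -
  have "(\<Sum>a\<in>A. if P a then c else 0) = (\<Sum>a\<in>{a\<in>A. P a}. c)"
    using assms(1) by (simp add: sum.inter_filter[symmetric])
  also have "\<dots> = real (card {a\<in>A. P a}) * c" by simp
  also have "card {a\<in>A. P a} \<le> Suc 0" using card_le_Suc0_iff_eq[of "{a\<in>A. P a}"] assms(1,3) by auto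
  then have "real (card {a\<in>A. P a}) * c \<le> 1 * c" using assms(2) by (intro mult_right_mono) auto
  finally show ?thesis by simp
qed

lemma card_fix0: fixes h m d j :: nat assumes d: "d < h" and j: "j < m" shows "card {\<delta>\<in>PiE {..<h} (\<lambda>_. {..<m}). \<delta> d = j} = m^(h-1)"
proof -
  have "{\<delta>\<in>PiE {..<h} (\<lambda>_. {..<m}). \<delta> d = j} = PiE {..<h} (\<lambda>i. if i = d then {j} else {..<m})"
  proof (intro equalityI subsetI)
    fix x assume x0: "x \<in> {\<delta>\<in>PiE {..<h} (\<lambda>_. {..<m}). \<delta> d = j}"
    have x12: "x \<in> PiE {..<h} (\<lambda>_. {..<m}) \<and> x d = j" using x0 by (rule CollectD)
    have x1: "x \<in> PiE {..<h} (\<lambda>_. {..<m})" using x12 by (rule conjunct1)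
    have x2: "x d = j" using x12 by (rule conjunct2)
    show "x \<in> PiE {..<h} (\<lambda>i. if i = d then {j} else {..<m})"
    proof (rule PiE_I)
      fix i assume i: "i \<in> {..<h}"
      have "x i \<in> {..<m}" using PiE_mem[OF x1 i] .
      then show "x i \<in> (if i = d then {j} else {..<m})"
        using x2 by (cases "i = d") simp_all
    next
      fix i assume "i \<notin> {..<h}" then show "x i = undefined" using x1 by (rule PiE_arb[rotated])
    qed
  next
    fix x assume x: "x \<in> PiE {..<h} (\<lambda>i. if i = d then {j} else {..<m})"
    have "x \<in> PiE {..<h} (\<lambda>_. {..<m})"
    proof (rule PiE_I)
      fix i assume i: "i \<in> {..<h}" then have "x i \<in> (if i = d then {j} else {..<m})" using x by (rule PiE_mem[rotated])
      then show "x i \<in> {..<m}" using j by (cases "i = d") auto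
    next
      fix i assume "i \<notin> {..<h}" then show "x i = undefined" using x by (rule PiE_arb[rotated])
    qed
    moreover have "x d = j" using PiE_mem[OF x, of d] d by simp
    ultimately show "x \<in> {\<delta>\<in>PiE {..<h} (\<lambda>_. {..<m}). \<delta> d = j}" by (intro CollectI conjI)
  qed
  then have "card {\<delta>\<in>PiE {..<h} (\<lambda>_. {..<m}). \<delta> d = j} = (\<Prod>i<h. card (if i = d then {j} else {..<m}))"
    by (simp add: card_PiE)
  also have "\<dots> = (\<Prod>i<h. if i = d then 1 else m)" by (intro prod.cong refl) simp
  also have "\<dots> = (\<Prod>i\<in>{..<h}-{d}. m)"
    using d by (subst prod.remove[of _ d]) auto
  also have "\<dots> = m^(h-1)" using d by simp
  finally show ?thesis .
qed

lemma minus_mod_cancel: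
  fixes x y C m :: nat
  assumes "x < m" "y < m" "(C + (m - x)) mod m = (C + (m - y)) mod m"
  shows "x = y"
proof -
  have "(C + (m - x)) mod m = ((m - x) mod m + C) mod m" by (simp add: mod_add_right_eq add.commute)
  moreover have "(C + (m - y)) mod m = ((m - y) mod m + C) mod m" by (simp add: mod_add_right_eq add.commute)
  ultimately have e: "(m - x) mod m = (m - y) mod m"
    using assms(3) mod_cancel_lt[of "(m - x) mod m" m "(m - y) mod m" C] assms(1) by simp
  have "(x + (m - y) mod m) mod m = (x + (m - x) mod m) mod m" using e by simp
  also have "\<dots> = (x + (m - x)) mod m" by (simp add: mod_add_right_eq)
  also have "\<dots> = 0" using assms(1) by simp
  also have "0 = (y + (m - y)) mod m" using assms(2) by simp
  also have "\<dots> = (y + (m - y) mod m) mod m" by (simp add: mod_add_right_eq)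
  finally show ?thesis using mod_cancel_lt[OF assms(1,2)] by blast
qed

locale orn =
  fixes h m :: nat and f :: "(nat \<Rightarrow> nat) \<Rightarrow> nat" and g :: "nat \<Rightarrow> nat \<Rightarrow> nat"
  assumes h1: "1 \<le> h" and m1: "1 \<le> m"
  and fV: "\<And>v. v \<in> PiE {..<h} (\<lambda>_. {..<m}) \<Longrightarrow> f v \<in> {1..m^h} \<and> g (f v) = v"
  and gN: "\<And>i. i \<in> {1..m^h} \<Longrightarrow> g i \<in> PiE {..<h} (\<lambda>_. {..<m}) \<and> f (g i) = i"
begin

abbreviation "V \<equiv> PiE {..<h} (\<lambda>_. {..<m})"
abbreviation "NN \<equiv> m^h"

definition amt :: "int \<Rightarrow> nat" where "amt s = nat ((s div int h) mod int m)"
definition dimof :: "int \<Rightarrow> nat" where "dimof s = nat (s mod int h)"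

definition step :: "int \<Rightarrow> nat \<Rightarrow> nat" where
  "step s i = (if i \<in> {1..NN} then f (\<lambda>d\<in>{..<h}. (g i d + (if d = dimof s then amt s else 0)) mod m) else i)"

definition sig :: "nat \<Rightarrow> nat \<Rightarrow> nat" where "sig k = step (int k)"

lemma amt_lt: "amt s < m" using m1 unfolding amt_def
  by (simp add: nat_less_iff)
lemma dimof_lt: "dimof s < h" using h1 unfolding dimof_def
  by (simp add: nat_less_iff)

lemma g_eqI: assumes "i \<in> {1..NN}" "j \<in> {1..NN}" "\<And>d. d < h \<Longrightarrow> g i d = g j d" shows "i = j"
proof -
  have "g i = g j"
    using gN[OF assms(1)] gN[OF assms(2)] assms(3) by (intro PiE_ext[of _ "{..<h}" "\<lambda>_. {..<m}"]) auto
  then show ?thesis using gN[OF assms(1)] gN[OF assms(2)] by metis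
qed

lemma gV: "i \<in> {1..NN} \<Longrightarrow> d < h \<Longrightarrow> g i d < m"
  using gN by (auto simp: PiE_iff)

lemma step_in: "i \<in> {1..NN} \<Longrightarrow> step s i \<in> {1..NN}"
  unfolding step_def using fV m1 by (auto simp: PiE_iff)

lemma g_step: "i \<in> {1..NN} \<Longrightarrow> d < h \<Longrightarrow> g (step s i) d = (g i d + (if d = dimof s then amt s else 0)) mod m"
proof -
  assume i: "i \<in> {1..NN}" and d: "d < h"
  have "(\<lambda>d\<in>{..<h}. (g i d + (if d = dimof s then amt s else 0)) mod m) \<in> V"
    using m1 by (auto simp: PiE_iff)
  then show ?thesis using fV i d unfolding step_def by auto
qed

lemma step_permutes: "step s permutes {1..NN}"
proof (rule bij_imp_permutes)
  have inj: "inj_on (step s) {1..NN}"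
  proof (rule inj_onI)
    fix i j assume i: "i \<in> {1..NN}" and j: "j \<in> {1..NN}" and e: "step s i = step s j"
    show "i = j"
    proof (rule g_eqI[OF i j])
      fix d assume d: "d < h"
      have "g (step s i) d = g (step s j) d" using e by simp
      then show "g i d = g j d" using g_step[OF i d] g_step[OF j d] gV[OF i d] gV[OF j d]
        by (metis mod_cancel_lt)
    qed
  qed
  have "step s ` {1..NN} = {1..NN}"
    by (rule endo_inj_surj) (use inj step_in in auto)
  then show "bij_betw (step s) {1..NN} {1..NN}" using inj by (simp add: bij_betw_def)
  show "\<And>x. x \<notin> {1..NN} \<Longrightarrow> step s x = x" unfolding step_def by auto
qed

lemma perm_at_sig: "perm_at (h*m) sig t = step t"
proof -
  have hm: "int (h*m) > 0" using h1 m1 by simp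
  have e: "int (nat (t mod int (h*m))) = t mod int (h*m)" using hm by simp
  moreover have "(t mod int (h*m)) mod int h = t mod int h"
    by (simp add: mod_mod_cancel)
  moreover have "((t mod int (h*m)) div int h) mod int m = (t div int h) mod int m"
    using h1 by (simp add: zmod_zmult2_eq div_mult2_eq' mod_mult2_eq)
  ultimately show ?thesis unfolding perm_at_def sig_def step_def amt_def dimof_def
    by (auto intro!: ext simp only: e)
qed

definition hopamt :: "int \<Rightarrow> bool list \<Rightarrow> nat \<Rightarrow> nat \<Rightarrow> nat" where
  "hopamt t bs d k = (if bs!k \<and> dimof (t + int k) = d then amt (t + int k) else 0)"

lemma pos_gen:
  "i \<in> {1..NN} \<Longrightarrow> step_end step i t bs \<in> {1..NN} \<and>
     (\<forall>d<h. g (step_end step i t bs) d = (g i d + (\<Sum>k<length bs. hopamt t bs d k)) mod m)"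
proof (induction bs arbitrary: i t)
  case Nil
  then show ?case using gV by simp
next
  case (Cons b bs)
  define i' where "i' = (if b then step t i else i)"
  have i': "i' \<in> {1..NN}" using Cons.prems step_in unfolding i'_def by auto
  note IH = Cons.IH[OF i', of "t+1"]
  have gi': "g i' d = (g i d + hopamt t (b#bs) d 0) mod m" if "d < h" for d
    using g_step[OF Cons.prems that, of t] gV[OF Cons.prems that] unfolding i'_def hopamt_def
    by auto
  have sh: "hopamt (t+1) bs d k = hopamt t (b#bs) d (Suc k)" for d k
    unfolding hopamt_def by (simp add: add.assoc)
  show ?case
  proof (intro conjI allI impI)
    show "step_end step i t (b # bs) \<in> {1..NN}" using IH by (simp add: i'_def)
    fix d assume d: "d < h"
    have "g (step_end step i t (b # bs)) d = (g i' d + (\<Sum>k<length bs. hopamt (t+1) bs d k)) mod m"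
      using IH d by (simp add: i'_def)
    also have "\<dots> = ((g i d + hopamt t (b#bs) d 0) + (\<Sum>k<length bs. hopamt t (b#bs) d (Suc k))) mod m"
      using gi'[OF d] sh by (simp add: mod_add_left_eq)
    also have "\<dots> = (g i d + (\<Sum>k<length (b#bs). hopamt t (b#bs) d k)) mod m"
      by (simp only: length_Cons sum.lessThan_Suc_shift add.assoc)
    finally show "g (step_end step i t (b # bs)) d = (g i d + (\<Sum>k<length (b#bs). hopamt t (b#bs) d k)) mod m" .
  qed
qed

lemma edge_gen:
  "(x, s, True) \<in> set (step_edges p i t bs) \<Longrightarrow>
     \<exists>j<length bs. s = t + int j \<and> bs!j \<and> x = step_end p i t (take j bs)"
proof (induction bs arbitrary: i t)
  case Nil
  then show ?case by simp
next
  case (Cons b bs)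
  show ?case
  proof (cases "(x, s, True) = (i, t, b)")
    case True
    then show ?thesis by (intro exI[of _ 0]) auto
  next
    case False
    then have "(x, s, True) \<in> set (step_edges p (if b then p t i else i) (t+1) bs)"
      using Cons.prems by (auto split: if_splits)
    from Cons.IH[OF this] obtain j where "j < length bs" "s = t + 1 + int j" "bs!j"
      "x = step_end p (if b then p t i else i) (t+1) (take j bs)" by blast
    then show ?thesis by (intro exI[of _ "Suc j"]) auto
  qed
qed

definition R0 :: "int \<Rightarrow> int" where "R0 t = t div int h + 1"
definition rho1 :: "int \<Rightarrow> (nat \<Rightarrow> nat) \<Rightarrow> nat \<Rightarrow> int" where
  "rho1 t \<delta> d = R0 t + (int (\<delta> d) - R0 t) mod int m"
definition rho2 :: "int \<Rightarrow> (nat \<Rightarrow> nat) \<Rightarrow> nat \<Rightarrow> int" where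
  "rho2 t \<delta> d = R0 t + int m + (int (\<delta> d) - R0 t - int m) mod int m"
definition u1 :: "int \<Rightarrow> (nat \<Rightarrow> nat) \<Rightarrow> nat \<Rightarrow> int" where
  "u1 t \<delta> d = int h * rho1 t \<delta> d + int d"
definition u2 :: "int \<Rightarrow> (nat \<Rightarrow> nat) \<Rightarrow> nat \<Rightarrow> int" where
  "u2 t \<delta> d = int h * rho2 t \<delta> d + int d"
definition Hset :: "int \<Rightarrow> (nat \<Rightarrow> nat) \<Rightarrow> (nat \<Rightarrow> nat) \<Rightarrow> int set" where
  "Hset t \<delta> \<delta>' = u1 t \<delta> ` {..<h} \<union> u2 t \<delta>' ` {..<h}"
definition len :: "int \<Rightarrow> nat" where "len t = nat (int h * (R0 t + 2 * int m) - t)"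
definition bl :: "int \<Rightarrow> (nat \<Rightarrow> nat) \<Rightarrow> (nat \<Rightarrow> nat) \<Rightarrow> bool list" where
  "bl t \<delta> \<delta>' = map (\<lambda>j. t + int j \<in> Hset t \<delta> \<delta>') [0..<len t]"

lemma hR0: "t < int h * R0 t" "int h * R0 t \<le> t + int h"
proof -
  have hp: "int h > 0" using h1 by simp
  have e: "t = int h * (t div int h) + t mod int h" by simp
  have "0 \<le> t mod int h" "t mod int h < int h" using hp by simp_all
  moreover have "int h * R0 t = int h * (t div int h) + int h" unfolding R0_def by (simp add: algebra_simps)
  ultimately show "t < int h * R0 t" "int h * R0 t \<le> t + int h"
    using e by linarith+
qed

lemma rho1_bounds: "R0 t \<le> rho1 t \<delta> d" "rho1 t \<delta> d \<le> R0 t + int m - 1"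
  using m1 unfolding rho1_def by (simp_all add: pos_mod_bound pos_mod_sign)
  
lemma rho2_bounds: "R0 t + int m \<le> rho2 t \<delta> d" "rho2 t \<delta> d \<le> R0 t + 2 * int m - 1"
  using m1 unfolding rho2_def by (simp_all add: pos_mod_bound pos_mod_sign)

lemma u1_bounds: "d < h \<Longrightarrow> t < u1 t \<delta> d" "d < h \<Longrightarrow> u1 t \<delta> d < int h * (R0 t + int m)"
proof -
  assume d: "d < h"
  have "int h * R0 t \<le> int h * rho1 t \<delta> d" using rho1_bounds by (simp add: mult_left_mono)
  then show "t < u1 t \<delta> d" using hR0(1)[of t] unfolding u1_def by simp
  have "int h * rho1 t \<delta> d \<le> int h * (R0 t + int m - 1)" using rho1_bounds by (simp add: mult_left_mono)
  then show "u1 t \<delta> d < int h * (R0 t + int m)" using d unfolding u1_def by (simp add: algebra_simps)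
qed

lemma u2_bounds: "int h * (R0 t + int m) \<le> u2 t \<delta> d" "d < h \<Longrightarrow> u2 t \<delta> d < int h * (R0 t + 2 * int m)"
proof -
  have "int h * (R0 t + int m) \<le> int h * rho2 t \<delta> d" using rho2_bounds by (simp add: mult_left_mono)
  then show "int h * (R0 t + int m) \<le> u2 t \<delta> d" unfolding u2_def by simp
  assume d: "d < h"
  have "int h * rho2 t \<delta> d \<le> int h * (R0 t + 2 * int m - 1)" using rho2_bounds by (simp add: mult_left_mono)
  then show "u2 t \<delta> d < int h * (R0 t + 2 * int m)" using d unfolding u2_def by (simp add: algebra_simps)
qed

lemma len_eq: "int (len t) = int h * (R0 t + 2 * int m) - t"
proof -
  have "0 \<le> int h * (2 * int m)" by simp
  then have "t \<le> int h * (R0 t + 2 * int m)" using hR0(1)[of t] by (simp add: algebra_simps del: mult_nonneg_nonneg)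
  then show ?thesis unfolding len_def by simp
qed

lemma dimof_hd: "d < h \<Longrightarrow> dimof (int h * r + int d) = d"
  unfolding dimof_def by simp

lemma amt_hd: "d < h \<Longrightarrow> amt (int h * r + int d) = nat (r mod int m)"
  unfolding amt_def using h1 by simp

lemma dimof_u1: "d < h \<Longrightarrow> dimof (u1 t \<delta> d) = d" unfolding u1_def by (rule dimof_hd)
lemma dimof_u2: "d < h \<Longrightarrow> dimof (u2 t \<delta> d) = d" unfolding u2_def by (rule dimof_hd)
lemma amt_u1: "d < h \<Longrightarrow> \<delta> d < m \<Longrightarrow> amt (u1 t \<delta> d) = \<delta> d"
  unfolding u1_def rho1_def by (simp add: amt_hd mod_add_right_eq)
lemma amt_u2: "d < h \<Longrightarrow> \<delta> d < m \<Longrightarrow> amt (u2 t \<delta> d) = \<delta> d"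
  unfolding u2_def rho2_def by (simp add: amt_hd mod_add_right_eq)

lemma hop_iff: "d < h \<Longrightarrow> (s \<in> Hset t \<delta> \<delta>' \<and> dimof s = d) \<longleftrightarrow> (s = u1 t \<delta> d \<or> s = u2 t \<delta>' d)"
  unfolding Hset_def using dimof_u1 dimof_u2 by auto

lemma u1_lt_u2: "d < h \<Longrightarrow> u1 t \<delta> d < u2 t \<delta>' d'"
  using u1_bounds(2)[of d t \<delta>] u2_bounds(1)[of t \<delta>' d'] by simp

lemma sum_delta_int:
  assumes "t < c"
  shows "(\<Sum>k<j. if t + int k = c then (A::nat) else 0) = (if c < t + int j then A else 0)"
proof -
  have "(\<Sum>k<j. if t + int k = c then A else 0) = (\<Sum>k\<in>{..<j}. if k = nat (c - t) then A else 0)"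
    using assms by (intro sum.cong) auto
  also have "\<dots> = (if nat (c - t) \<in> {..<j} then A else 0)" by (simp add: sum.delta)
  also have "\<dots> = (if c < t + int j then A else 0)" using assms by auto
  finally show ?thesis .
qed

lemma hopsum:
  assumes d: "d < h" and j: "j \<le> len t" and \<delta>: "\<delta> d < m" and \<delta>': "\<delta>' d < m"
  shows "(\<Sum>k<j. hopamt t (bl t \<delta> \<delta>') d k) =
     (if u1 t \<delta> d < t + int j then \<delta> d else 0) + (if u2 t \<delta>' d < t + int j then \<delta>' d else 0)"
proof -
  have "(\<Sum>k<j. hopamt t (bl t \<delta> \<delta>') d k) =
     (\<Sum>k<j. (if t + int k = u1 t \<delta> d then \<delta> d else 0) + (if t + int k = u2 t \<delta>' d then \<delta>' d else 0))"
  proof (intro sum.cong refl)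
    fix k assume "k \<in> {..<j}"
    then have k: "k < len t" using j by simp
    have "bl t \<delta> \<delta>' ! k = (t + int k \<in> Hset t \<delta> \<delta>')" using k unfolding bl_def by simp
    then show "hopamt t (bl t \<delta> \<delta>') d k = (if t + int k = u1 t \<delta> d then \<delta> d else 0) + (if t + int k = u2 t \<delta>' d then \<delta>' d else 0)"
      unfolding hopamt_def using hop_iff[OF d, of "t + int k" t \<delta> \<delta>'] u1_lt_u2[OF d, of t \<delta> \<delta>' d]
        amt_u1[of d \<delta> t, OF d \<delta>] amt_u2[of d \<delta>' t, OF d \<delta>'] by auto
  qed
  also have "\<dots> = (if u1 t \<delta> d < t + int j then \<delta> d else 0) + (if u2 t \<delta>' d < t + int j then \<delta>' d else 0)"
    using sum_delta_int[where t=t and c="u1 t \<delta> d" and j=j and A="\<delta> d"] sum_delta_int[where t=t and c="u2 t \<delta>' d" and j=j and A="\<delta>' d"]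
      u1_bounds(1)[OF d, of t \<delta>] u1_lt_u2[OF d, of t \<delta> \<delta>' d]
    by (simp add: sum.distrib)
  finally show ?thesis .
qed

definition dprime :: "nat \<Rightarrow> nat \<Rightarrow> (nat \<Rightarrow> nat) \<Rightarrow> (nat \<Rightarrow> nat)" where
  "dprime a b \<delta> = (\<lambda>d\<in>{..<h}. (g b d + (m - g a d) + (m - \<delta> d)) mod m)"
definition pth :: "nat \<Rightarrow> nat \<Rightarrow> int \<Rightarrow> (nat \<Rightarrow> nat) \<Rightarrow> path" where
  "pth a b t \<delta> = (a, t, bl t \<delta> (dprime a b \<delta>))"
definition pos1 :: "nat \<Rightarrow> int \<Rightarrow> (nat \<Rightarrow> nat) \<Rightarrow> int \<Rightarrow> nat" where
  "pos1 a t \<delta> u = f (\<lambda>d\<in>{..<h}. (g a d + (if u1 t \<delta> d < u then \<delta> d else 0)) mod m)"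
definition pos2 :: "nat \<Rightarrow> int \<Rightarrow> (nat \<Rightarrow> nat) \<Rightarrow> int \<Rightarrow> nat" where
  "pos2 b t \<delta>' u = f (\<lambda>d\<in>{..<h}. (g b d + (if u2 t \<delta>' d < u then 0 else m - \<delta>' d)) mod m)"

lemma dprime_V: "dprime a b \<delta> \<in> V" using m1 unfolding dprime_def by (auto simp: PiE_iff)

lemma V_lt: "\<delta> \<in> V \<Longrightarrow> d < h \<Longrightarrow> \<delta> d < m" by (auto simp: PiE_iff)

lemma f_gI: assumes "x \<in> {1..NN}" "w \<in> V" "\<And>d. d < h \<Longrightarrow> g x d = w d" shows "x = f w"
proof -
  have fw: "f w \<in> {1..NN}" "g (f w) = w" using fV[OF assms(2)] by auto
  show ?thesis by (rule g_eqI[OF assms(1) fw(1)]) (simp add: fw(2) assms(3))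
qed


lemma pos_path:
  assumes a: "a \<in> {1..NN}" and \<delta>: "\<delta> \<in> V" and \<delta>': "\<delta>' \<in> V" and j: "j \<le> len t"
  shows "step_end step a t (take j (bl t \<delta> \<delta>')) \<in> {1..NN}"
    "d < h \<Longrightarrow> g (step_end step a t (take j (bl t \<delta> \<delta>'))) d =
      (g a d + (if u1 t \<delta> d < t + int j then \<delta> d else 0) + (if u2 t \<delta>' d < t + int j then \<delta>' d else 0)) mod m"
proof -
  have lj: "length (take j (bl t \<delta> \<delta>')) = j" using j unfolding bl_def by simp
  note P = pos_gen[OF a, of t "take j (bl t \<delta> \<delta>')"]
  then show "step_end step a t (take j (bl t \<delta> \<delta>')) \<in> {1..NN}" by simp
  assume d: "d < h"
  have "(\<Sum>k<j. hopamt t (take j (bl t \<delta> \<delta>')) d k) = (\<Sum>k<j. hopamt t (bl t \<delta> \<delta>') d k)"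
    unfolding hopamt_def by (intro sum.cong) auto
  also have "\<dots> = (if u1 t \<delta> d < t + int j then \<delta> d else 0) + (if u2 t \<delta>' d < t + int j then \<delta>' d else 0)"
    by (rule hopsum[where \<delta>=\<delta> and \<delta>'=\<delta>', OF d j V_lt[OF \<delta> d] V_lt[OF \<delta>' d]])
  finally show "g (step_end step a t (take j (bl t \<delta> \<delta>'))) d =
      (g a d + (if u1 t \<delta> d < t + int j then \<delta> d else 0) + (if u2 t \<delta>' d < t + int j then \<delta>' d else 0)) mod m"
    using P d lj by (simp add: add.assoc)
qed


lemma pth_end:
  assumes a: "a \<in> {1..NN}" and b: "b \<in> {1..NN}" and \<delta>: "\<delta> \<in> V"
  shows "step_end step a t (bl t \<delta> (dprime a b \<delta>)) = b"
proof -
  have lb: "length (bl t \<delta> (dprime a b \<delta>)) = len t" unfolding bl_def by simp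
  note P = pos_path[where j="len t" and t=t and \<delta>'="dprime a b \<delta>", OF a \<delta> dprime_V order_refl]
  have tk: "take (len t) (bl t \<delta> (dprime a b \<delta>)) = bl t \<delta> (dprime a b \<delta>)" using lb by simp
  show ?thesis
  proof (rule g_eqI)
    show "step_end step a t (bl t \<delta> (dprime a b \<delta>)) \<in> {1..NN}" using P(1) tk by simp
    show "b \<in> {1..NN}" by fact
    fix d assume d: "d < h"
    have "u1 t \<delta> d < t + int (len t)" "u2 t (dprime a b \<delta>) d < t + int (len t)"
    proof -
      have "int h * (R0 t + int m) \<le> int h * (R0 t + 2 * int m)" by (intro mult_left_mono) auto
      then show "u1 t \<delta> d < t + int (len t)" "u2 t (dprime a b \<delta>) d < t + int (len t)"
        using u1_bounds(2)[OF d, of t \<delta>] u2_bounds(2)[OF d, of t "dprime a b \<delta>"] len_eq[of t]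
        by linarith+
    qed
    then have "g (step_end step a t (bl t \<delta> (dprime a b \<delta>))) d = (g a d + \<delta> d + dprime a b \<delta> d) mod m"
      using P(2)[OF d] tk by simp
    also have "\<dots> = g b d" unfolding dprime_def using d
      key_arith[OF gV[OF a d] V_lt[OF \<delta> d] gV[OF b d]] by simp
    finally show "g (step_end step a t (bl t \<delta> (dprime a b \<delta>))) d = g b d" .
  qed
qed

lemma pth_edge:
  assumes a: "a \<in> {1..NN}" and b: "b \<in> {1..NN}" and \<delta>: "\<delta> \<in> V"
    and e: "(x, u, True) \<in> path_edges (h*m) sig (pth a b t \<delta>)"
  shows "(u = u1 t \<delta> (dimof u) \<and> x = pos1 a t \<delta> u) \<or>
         (u = u2 t (dprime a b \<delta>) (dimof u) \<and> x = pos2 b t (dprime a b \<delta>) u)"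
proof -
  define \<delta>' where "\<delta>' = dprime a b \<delta>"
  have \<delta>'V: "\<delta>' \<in> V" unfolding \<delta>'_def by (rule dprime_V)
  have "(x, u, True) \<in> set (step_edges step a t (bl t \<delta> \<delta>'))"
    using e unfolding path_edges_def pth_def perm_at_sig \<delta>'_def by simp
  from edge_gen[OF this] obtain j where j: "j < length (bl t \<delta> \<delta>')" and u: "u = t + int j"
    and bj: "bl t \<delta> \<delta>' ! j" and x: "x = step_end step a t (take j (bl t \<delta> \<delta>'))" by blast
  have jl: "j < len t" using j unfolding bl_def by simp
  have uH: "u \<in> Hset t \<delta> \<delta>'" using bj jl u unfolding bl_def by simp
  note P = pos_path[where j=j and t=t and \<delta>'=\<delta>', OF a \<delta> \<delta>'V, OF less_imp_le[OF jl]]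
  have xN: "x \<in> {1..NN}" using P(1) x by simp
  have gx: "g x d = (g a d + (if u1 t \<delta> d < u then \<delta> d else 0) + (if u2 t \<delta>' d < u then \<delta>' d else 0)) mod m"
    if "d < h" for d using P(2)[OF that] x u by simp
  from uH obtain d0 where d0: "d0 < h" and uu: "u = u1 t \<delta> d0 \<or> u = u2 t \<delta>' d0"
    unfolding Hset_def by auto
  from uu show ?thesis
  proof
    assume u1: "u = u1 t \<delta> d0"
    have "x = pos1 a t \<delta> u" unfolding pos1_def
    proof (rule f_gI[OF xN])
      show "(\<lambda>d\<in>{..<h}. (g a d + (if u1 t \<delta> d < u then \<delta> d else 0)) mod m) \<in> V"
        using m1 by (auto simp: PiE_iff)
      fix d assume d: "d < h"
      have "\<not> u2 t \<delta>' d < u" using u1_lt_u2[OF d0, of t \<delta> \<delta>' d] u1 by simp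
      then show "g x d = (\<lambda>d\<in>{..<h}. (g a d + (if u1 t \<delta> d < u then \<delta> d else 0)) mod m) d"
        using gx[OF d] d by simp
    qed
    moreover have "dimof u = d0" using u1 dimof_u1[OF d0] by simp
    ultimately show ?thesis using u1 by simp
  next
    assume u2: "u = u2 t \<delta>' d0"
    have "x = pos2 b t \<delta>' u" unfolding pos2_def
    proof (rule f_gI[OF xN])
      show "(\<lambda>d\<in>{..<h}. (g b d + (if u2 t \<delta>' d < u then 0 else m - \<delta>' d)) mod m) \<in> V"
        using m1 by (auto simp: PiE_iff)
      fix d assume d: "d < h"
      have lt1: "u1 t \<delta> d < u" using u1_lt_u2[OF d, of t \<delta> \<delta>' d0] u2 by simp
      have ga: "g a d < m" "\<delta> d < m" "g b d < m" using gV[OF a d] V_lt[OF \<delta> d] gV[OF b d] by auto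
      have dd: "\<delta>' d = (g b d + (m - g a d) + (m - \<delta> d)) mod m" unfolding \<delta>'_def dprime_def using d by simp
      show "g x d = (\<lambda>d\<in>{..<h}. (g b d + (if u2 t \<delta>' d < u then 0 else m - \<delta>' d)) mod m) d"
      proof (cases "u2 t \<delta>' d < u")
        case True
        then show ?thesis using gx[OF d] d lt1 key_arith[OF ga] dd ga(3) by simp
      next
        case False
        then show ?thesis using gx[OF d] d lt1 key_arith2[OF ga] dd by simp
      qed
    qed
    moreover have "dimof u = d0" using u2 dimof_u2[OF d0] by simp
    ultimately show ?thesis using u2 \<delta>'_def by simp
  qed
qed

lemma u_decomp: "u = int h * (u div int h) + int (dimof u)"
  unfolding dimof_def using h1 by simp

lemma hd_inj: assumes "d < h" "d' < h" "int h * r + int d = int h * r' + int d'" shows "r = r'"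
proof -
  have "(int h * r + int d) div int h = r" using assms(1) by simp
  moreover have "(int h * r' + int d') div int h = r'" using assms(2) by simp
  ultimately show ?thesis using assms(3) by simp
qed

lemma div_window: assumes "lo \<le> t div int h" "t div int h \<le> hi" shows "int h * lo \<le> t" "t < int h * (hi + 1)"
proof -
  have hp: "int h > 0" using h1 by simp
  have e: "t = int h * (t div int h) + t mod int h" by simp
  have "0 \<le> t mod int h" "t mod int h < int h" using hp by simp_all
  moreover have "int h * lo \<le> int h * (t div int h)" using assms(1) hp by simp
  moreover have "int h * (t div int h) \<le> int h * hi" using assms(2) hp by simp
  moreover have "int h * (hi + 1) = int h * hi + int h" by (simp add: algebra_simps)
  ultimately show "int h * lo \<le> t" "t < int h * (hi + 1)" using e by linarith+
qed

lemma u1_window: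
  assumes "u = u1 t \<delta> (dimof u)"
  shows "t \<in> {int h * (u div int h - int m) ..< int h * (u div int h)}"
proof -
  have "rho1 t \<delta> (dimof u) = u div int h"
    using hd_inj[OF dimof_lt dimof_lt] assms u_decomp[of u] unfolding u1_def by metis
  then have "u div int h - int m \<le> t div int h" "t div int h \<le> u div int h - 1"
    using rho1_bounds[of t \<delta> "dimof u"] unfolding R0_def by simp_all
  from div_window[OF this] show ?thesis by simp
qed

lemma u2_window:
  assumes "u = u2 t \<delta> (dimof u)"
  shows "t \<in> {int h * (u div int h - 2 * int m) ..< int h * (u div int h - int m)}"
proof -
  have "rho2 t \<delta> (dimof u) = u div int h"
    using hd_inj[OF dimof_lt dimof_lt] assms u_decomp[of u] unfolding u2_def by metis
  then have "u div int h - 2 * int m \<le> t div int h" "t div int h \<le> u div int h - int m - 1"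
    using rho2_bounds[of t \<delta> "dimof u"] unfolding R0_def by simp_all
  from div_window[OF this] show ?thesis by simp
qed

lemma card_int_window: "card {int h * (c - int m) ..< int h * c} = h * m"
  by (simp add: algebra_simps nat_mult_distrib)

lemma sum_ind_card: "finite W \<Longrightarrow> (\<Sum>t\<in>W. if P t then 1 else 0 :: real) = real (card {t\<in>W. P t})"
  by (simp add: sum.inter_filter[symmetric])

lemma sumt1: assumes W: "finite W" and \<delta>: "\<delta> \<in> V"
  shows "(\<Sum>t\<in>W. if u = u1 t \<delta> (dimof u) then 1 else 0 :: real) \<le> (if \<delta> (dimof u) = amt u then real (h*m) else 0)"
proof -
  have sub: "{t\<in>W. u = u1 t \<delta> (dimof u)} \<subseteq> {int h * (u div int h - int m) ..< int h * (u div int h)}"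
    using u1_window by blast
  show ?thesis
  proof (cases "\<delta> (dimof u) = amt u")
    case True
    have "card {t\<in>W. u = u1 t \<delta> (dimof u)} \<le> h * m"
      using card_mono[OF _ sub] card_int_window by simp
    then have "real (card {t\<in>W. u = u1 t \<delta> (dimof u)}) \<le> real (h * m)" by (rule of_nat_mono)
    moreover have "(\<Sum>t\<in>W. if u = u1 t \<delta> (dimof u) then 1 else 0 :: real) = real (card {t\<in>W. u = u1 t \<delta> (dimof u)})"
      by (rule sum_ind_card[OF W])
    ultimately show ?thesis using True by simp
  next
    case False
    have "{t\<in>W. u = u1 t \<delta> (dimof u)} = {}"
    proof (rule ccontr)
      assume "{t\<in>W. u = u1 t \<delta> (dimof u)} \<noteq> {}"
      then obtain t where "u = u1 t \<delta> (dimof u)" by blast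
      then have "amt u = \<delta> (dimof u)" using amt_u1[of "dimof u" \<delta> t, OF dimof_lt V_lt[OF \<delta> dimof_lt]] by metis
      then show False using False by simp
    qed
    then show ?thesis using False by simp
  qed
qed

lemma sumt2: assumes W: "finite W" and \<delta>: "\<delta> \<in> V"
  shows "(\<Sum>t\<in>W. if u = u2 t \<delta> (dimof u) then 1 else 0 :: real) \<le> (if \<delta> (dimof u) = amt u then real (h*m) else 0)"
proof -
  have e: "u div int h - 2 * int m = (u div int h - int m) - int m" by simp
  have sub: "{t\<in>W. u = u2 t \<delta> (dimof u)} \<subseteq> {int h * ((u div int h - int m) - int m) ..< int h * (u div int h - int m)}"
  proof
    fix t assume "t \<in> {t\<in>W. u = u2 t \<delta> (dimof u)}"
    then have "t \<in> {int h * (u div int h - 2 * int m) ..< int h * (u div int h - int m)}"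
      using u2_window by blast
    then show "t \<in> {int h * ((u div int h - int m) - int m) ..< int h * (u div int h - int m)}"
      by (simp only: e)
  qed
  show ?thesis
  proof (cases "\<delta> (dimof u) = amt u")
    case True
    have "card {t\<in>W. u = u2 t \<delta> (dimof u)} \<le> h * m"
      using card_mono[OF _ sub] card_int_window[of "u div int h - int m"] by simp
    then have "real (card {t\<in>W. u = u2 t \<delta> (dimof u)}) \<le> real (h * m)" by (rule of_nat_mono)
    moreover have "(\<Sum>t\<in>W. if u = u2 t \<delta> (dimof u) then 1 else 0 :: real) = real (card {t\<in>W. u = u2 t \<delta> (dimof u)})"
      by (rule sum_ind_card[OF W])
    ultimately show ?thesis using True by simp
  next
    case False
    have "{t\<in>W. u = u2 t \<delta> (dimof u)} = {}"
    proof (rule ccontr)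
      assume "{t\<in>W. u = u2 t \<delta> (dimof u)} \<noteq> {}"
      then obtain t where "u = u2 t \<delta> (dimof u)" by blast
      then have "amt u = \<delta> (dimof u)" using amt_u2[of "dimof u" \<delta> t, OF dimof_lt V_lt[OF \<delta> dimof_lt]] by metis
      then show False using False by simp
    qed
    then show ?thesis using False by simp
  qed
qed

lemma card_fix: "d < h \<Longrightarrow> j < m \<Longrightarrow> card {\<delta>\<in>V. \<delta> d = j} = m^(h-1)"
  by (rule card_fix0)

lemma NN_eq: "real NN = real m * real m^(h-1)"
proof -
  obtain k where "h = Suc k" using h1 by (cases h) auto
  then show ?thesis by simp
qed

lemma pos1_inj: assumes "a \<in> {1..NN}" "a' \<in> {1..NN}" "\<delta> \<in> V" "pos1 a t \<delta> u = pos1 a' t \<delta> u" shows "a = a'"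
proof (rule g_eqI[OF assms(1,2)])
  fix d assume d: "d < h"
  let ?w = "\<lambda>a. (\<lambda>d\<in>{..<h}. (g a d + (if u1 t \<delta> d < u then \<delta> d else 0)) mod m)"
  have wV: "?w a \<in> V" "?w a' \<in> V" using m1 by (auto simp: PiE_iff)
  have e1: "g (f (?w a)) = ?w a" using fV[OF wV(1)] by (rule conjunct2)
  have e2: "g (f (?w a')) = ?w a'" using fV[OF wV(2)] by (rule conjunct2)
  have "f (?w a) = f (?w a')" using assms(4) unfolding pos1_def .
  then have "g (f (?w a)) = g (f (?w a'))" by (rule arg_cong)
  then have "?w a = ?w a'" unfolding e1 e2 .
  then have "?w a d = ?w a' d" by simp
  then have "(g a d + (if u1 t \<delta> d < u then \<delta> d else 0)) mod m = (g a' d + (if u1 t \<delta> d < u then \<delta> d else 0)) mod m"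
    using d by simp
  then show "g a d = g a' d" using gV[OF assms(1) d] gV[OF assms(2) d] by (rule mod_cancel_lt[rotated 2])
qed

lemma pos2_inj: assumes "b \<in> {1..NN}" "b' \<in> {1..NN}" "\<delta> \<in> V" "pos2 b t \<delta> u = pos2 b' t \<delta> u" shows "b = b'"
proof (rule g_eqI[OF assms(1,2)])
  fix d assume d: "d < h"
  let ?w = "\<lambda>b. (\<lambda>d\<in>{..<h}. (g b d + (if u2 t \<delta> d < u then 0 else m - \<delta> d)) mod m)"
  have wV: "?w b \<in> V" "?w b' \<in> V" using m1 by (auto simp: PiE_iff)
  have e1: "g (f (?w b)) = ?w b" using fV[OF wV(1)] by (rule conjunct2)
  have e2: "g (f (?w b')) = ?w b'" using fV[OF wV(2)] by (rule conjunct2)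
  have "f (?w b) = f (?w b')" using assms(4) unfolding pos2_def .
  then have "g (f (?w b)) = g (f (?w b'))" by (rule arg_cong)
  then have "?w b = ?w b'" unfolding e1 e2 .
  then have "?w b d = ?w b' d" by simp
  then have "(g b d + (if u2 t \<delta> d < u then 0 else m - \<delta> d)) mod m = (g b' d + (if u2 t \<delta> d < u then 0 else m - \<delta> d)) mod m"
    using d by simp
  then show "g b d = g b' d" using gV[OF assms(1) d] gV[OF assms(2) d] by (rule mod_cancel_lt[rotated 2])
qed

lemma finite_V: "finite V" by (simp add: finite_PiE)

lemma dprime_inj: assumes a: "a \<in> {1..NN}" and b: "b \<in> {1..NN}" shows "inj_on (dprime a b) V"
proof (rule inj_onI)
  fix \<delta>1 \<delta>2 assume d1: "\<delta>1 \<in> V" and d2: "\<delta>2 \<in> V" and e: "dprime a b \<delta>1 = dprime a b \<delta>2"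
  show "\<delta>1 = \<delta>2"
  proof (rule PiE_ext[OF d1 d2])
    fix d assume "d \<in> {..<h}"
    then have d: "d < h" by simp
    have "dprime a b \<delta>1 d = dprime a b \<delta>2 d" using e by simp
    then have "(g b d + (m - g a d) + (m - \<delta>1 d)) mod m = (g b d + (m - g a d) + (m - \<delta>2 d)) mod m"
      unfolding dprime_def using d by simp
    then show "\<delta>1 d = \<delta>2 d" using minus_mod_cancel V_lt[OF d1 d] V_lt[OF d2 d] by blast
  qed
qed

definition Rt :: "nat \<Rightarrow> nat \<Rightarrow> int \<Rightarrow> path \<Rightarrow> real" where
  "Rt a b t P = (\<Sum>\<delta>\<in>V. if pth a b t \<delta> = P then 1 / real NN else 0)"

definition A1 :: "nat \<Rightarrow> int \<Rightarrow> int \<Rightarrow> nat \<Rightarrow> real" where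
  "A1 x u t a = (\<Sum>\<delta>\<in>V. if u = u1 t \<delta> (dimof u) \<and> x = pos1 a t \<delta> u then 1 / real NN else 0)"
definition B2 :: "nat \<Rightarrow> int \<Rightarrow> int \<Rightarrow> nat \<Rightarrow> real" where
  "B2 x u t b = (\<Sum>\<delta>\<in>V. if u = u2 t \<delta> (dimof u) \<and> x = pos2 b t \<delta> u then 1 / real NN else 0)"

lemma inner_bound:
  assumes a: "a \<in> {1..NN}" and b: "b \<in> {1..NN}" and S: "finite S"
    and SE: "\<And>P. P \<in> S \<Longrightarrow> (x, u, True) \<in> path_edges (h*m) sig P"
  shows "(\<Sum>P\<in>S. Rt a b t P) \<le> A1 x u t a + B2 x u t b"
proof -
  let ?c = "1 / real NN"
  let ?F = "\<lambda>\<delta>. if u = u2 t \<delta> (dimof u) \<and> x = pos2 b t \<delta> u then ?c else 0"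
  have "(\<Sum>P\<in>S. Rt a b t P) = (\<Sum>\<delta>\<in>V. \<Sum>P\<in>S. if pth a b t \<delta> = P then ?c else 0)"
    unfolding Rt_def by (rule sum.swap)
  also have "\<dots> = (\<Sum>\<delta>\<in>V. if pth a b t \<delta> \<in> S then ?c else 0)"
    using S by (simp add: sum.delta)
  also have "\<dots> \<le> (\<Sum>\<delta>\<in>V. (if u = u1 t \<delta> (dimof u) \<and> x = pos1 a t \<delta> u then ?c else 0) + ?F (dprime a b \<delta>))"
  proof (rule sum_mono)
    fix \<delta> assume \<delta>: "\<delta> \<in> V"
    show "(if pth a b t \<delta> \<in> S then ?c else 0) \<le> (if u = u1 t \<delta> (dimof u) \<and> x = pos1 a t \<delta> u then ?c else 0) + ?F (dprime a b \<delta>)"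
    proof (cases "pth a b t \<delta> \<in> S")
      case True
      from pth_edge[OF a b \<delta> SE[OF True]] show ?thesis using True by auto
    qed auto
  qed
  also have "\<dots> = A1 x u t a + (\<Sum>\<delta>\<in>V. ?F (dprime a b \<delta>))"
    unfolding A1_def by (simp add: sum.distrib)
  also have "(\<Sum>\<delta>\<in>V. ?F (dprime a b \<delta>)) = (\<Sum>\<delta>'\<in>dprime a b ` V. ?F \<delta>')"
    using sum.reindex[OF dprime_inj[OF a b], of ?F] by simp
  also have "\<dots> \<le> (\<Sum>\<delta>'\<in>V. ?F \<delta>')"
    by (rule sum_mono2[OF finite_V]) (use dprime_V in auto)
  also have "\<dots> = B2 x u t b" unfolding B2_def ..
  finally show ?thesis by simp
qed

lemma sum_card_V: "(\<Sum>\<delta>\<in>V. if \<delta> (dimof u) = amt u then K else 0 :: real) = K * real (m^(h-1))"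
proof -
  have "(\<Sum>\<delta>\<in>V. if \<delta> (dimof u) = amt u then K else 0 :: real) = (\<Sum>\<delta>\<in>{\<delta>\<in>V. \<delta> (dimof u) = amt u}. K)"
    using finite_V by (simp add: sum.inter_filter[symmetric])
  also have "\<dots> = real (card {\<delta>\<in>V. \<delta> (dimof u) = amt u}) * K" by simp
  also have "card {\<delta>\<in>V. \<delta> (dimof u) = amt u} = m^(h-1)" by (rule card_fix[OF dimof_lt amt_lt])
  finally show ?thesis by simp
qed

lemma final_count: "(1 / real NN) * (real (h*m) * real (m^(h-1))) = real h"
  using NN_eq m1 by (simp add: field_simps)

lemma sumA: assumes W: "finite W" shows "(\<Sum>t\<in>W. \<Sum>a\<in>{1..NN}. A1 x u t a) \<le> real h"
proof -
  let ?c = "1 / real NN"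
  have c0: "0 \<le> ?c" by simp
  have "(\<Sum>t\<in>W. \<Sum>a\<in>{1..NN}. A1 x u t a) =
      (\<Sum>t\<in>W. \<Sum>\<delta>\<in>V. \<Sum>a\<in>{1..NN}. if u = u1 t \<delta> (dimof u) \<and> x = pos1 a t \<delta> u then ?c else 0)"
    unfolding A1_def by (intro sum.cong refl sum.swap)
  also have "\<dots> \<le> (\<Sum>t\<in>W. \<Sum>\<delta>\<in>V. if u = u1 t \<delta> (dimof u) then ?c else 0)"
  proof (intro sum_mono)
    fix t \<delta> assume \<delta>: "\<delta> \<in> V"
    show "(\<Sum>a\<in>{1..NN}. if u = u1 t \<delta> (dimof u) \<and> x = pos1 a t \<delta> u then ?c else 0) \<le> (if u = u1 t \<delta> (dimof u) then ?c else 0)"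
    proof (cases "u = u1 t \<delta> (dimof u)")
      case True
      have "(\<Sum>a\<in>{1..NN}. if u = u1 t \<delta> (dimof u) \<and> x = pos1 a t \<delta> u then ?c else 0) = (\<Sum>a\<in>{1..NN}. if x = pos1 a t \<delta> u then ?c else 0)"
        using True by simp
      also have "\<dots> \<le> ?c"
      proof (rule sum_le_unique[OF _ c0])
        fix z z' assume "z \<in> {1..NN}" "z' \<in> {1..NN}" "x = pos1 z t \<delta> u" "x = pos1 z' t \<delta> u"
        then show "z = z'" using pos1_inj[OF _ _ \<delta>, of z z' t u] by simp
      qed simp
      finally show ?thesis using True by simp
    qed simp
  qed
  also have "\<dots> = (\<Sum>\<delta>\<in>V. ?c * (\<Sum>t\<in>W. if u = u1 t \<delta> (dimof u) then 1 else 0))"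
    by (subst sum.swap, simp only: sum_distrib_left, intro sum.cong refl, simp)
  also have "\<dots> \<le> (\<Sum>\<delta>\<in>V. ?c * (if \<delta> (dimof u) = amt u then real (h*m) else 0))"
    by (intro sum_mono mult_left_mono sumt1[OF W] c0)
  also have "\<dots> = ?c * (\<Sum>\<delta>\<in>V. if \<delta> (dimof u) = amt u then real (h*m) else 0)"
    by (simp add: sum_distrib_left)
  also have "\<dots> = real h" unfolding sum_card_V by (rule final_count)
  finally show ?thesis .
qed

lemma sumB: assumes W: "finite W" shows "(\<Sum>t\<in>W. \<Sum>b\<in>{1..NN}. B2 x u t b) \<le> real h"
proof -
  let ?c = "1 / real NN"
  have c0: "0 \<le> ?c" by simp
  have "(\<Sum>t\<in>W. \<Sum>b\<in>{1..NN}. B2 x u t b) =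
      (\<Sum>t\<in>W. \<Sum>\<delta>\<in>V. \<Sum>b\<in>{1..NN}. if u = u2 t \<delta> (dimof u) \<and> x = pos2 b t \<delta> u then ?c else 0)"
    unfolding B2_def by (intro sum.cong refl sum.swap)
  also have "\<dots> \<le> (\<Sum>t\<in>W. \<Sum>\<delta>\<in>V. if u = u2 t \<delta> (dimof u) then ?c else 0)"
  proof (intro sum_mono)
    fix t \<delta> assume \<delta>: "\<delta> \<in> V"
    show "(\<Sum>b\<in>{1..NN}. if u = u2 t \<delta> (dimof u) \<and> x = pos2 b t \<delta> u then ?c else 0) \<le> (if u = u2 t \<delta> (dimof u) then ?c else 0)"
    proof (cases "u = u2 t \<delta> (dimof u)")
      case True
      have "(\<Sum>b\<in>{1..NN}. if u = u2 t \<delta> (dimof u) \<and> x = pos2 b t \<delta> u then ?c else 0) = (\<Sum>b\<in>{1..NN}. if x = pos2 b t \<delta> u then ?c else 0)"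
        using True by simp
      also have "\<dots> \<le> ?c"
      proof (rule sum_le_unique[OF _ c0])
        fix z z' assume "z \<in> {1..NN}" "z' \<in> {1..NN}" "x = pos2 z t \<delta> u" "x = pos2 z' t \<delta> u"
        then show "z = z'" using pos2_inj[OF _ _ \<delta>, of z z' t u] by simp
      qed simp
      finally show ?thesis using True by simp
    qed simp
  qed
  also have "\<dots> = (\<Sum>\<delta>\<in>V. ?c * (\<Sum>t\<in>W. if u = u2 t \<delta> (dimof u) then 1 else 0))"
    by (subst sum.swap, simp only: sum_distrib_left, intro sum.cong refl, simp)
  also have "\<dots> \<le> (\<Sum>\<delta>\<in>V. ?c * (if \<delta> (dimof u) = amt u then real (h*m) else 0))"
    by (intro sum_mono mult_left_mono sumt2[OF W] c0)
  also have "\<dots> = ?c * (\<Sum>\<delta>\<in>V. if \<delta> (dimof u) = amt u then real (h*m) else 0)"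
    by (simp add: sum_distrib_left)
  also have "\<dots> = real h" unfolding sum_card_V by (rule final_count)
  finally show ?thesis .
qed

lemma A1_nonneg: "0 \<le> A1 x u t a" unfolding A1_def by (intro sum_nonneg) simp
lemma B2_nonneg: "0 \<le> B2 x u t b" unfolding B2_def by (intro sum_nonneg) simp

lemma real_bound:
  assumes Dn: "\<And>t a b. a \<in> {1..NN} \<Longrightarrow> b \<in> {1..NN} \<Longrightarrow> 0 \<le> D t a b"
    and row: "\<And>t a. a \<in> {1..NN} \<Longrightarrow> (\<Sum>b\<in>{1..NN}. D t a b) \<le> r"
    and col: "\<And>t b. b \<in> {1..NN} \<Longrightarrow> (\<Sum>a\<in>{1..NN}. D t a b) \<le> r"
    and W: "finite W" and r0: "0 \<le> r" and hr: "2 * real h * r \<le> 1"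
    and G: "\<And>a b t. a \<in> {1..NN} \<Longrightarrow> b \<in> {1..NN} \<Longrightarrow> G a b t \<le> A1 x u t a + B2 x u t b"
  shows "(\<Sum>a\<in>{1..NN}. \<Sum>b\<in>{1..NN}. \<Sum>t\<in>W. D t a b * G a b t) \<le> 1"
proof -
  have "(\<Sum>a\<in>{1..NN}. \<Sum>b\<in>{1..NN}. \<Sum>t\<in>W. D t a b * G a b t) \<le>
        (\<Sum>a\<in>{1..NN}. \<Sum>b\<in>{1..NN}. \<Sum>t\<in>W. D t a b * A1 x u t a + D t a b * B2 x u t b)"
    by (intro sum_mono) (use Dn G in \<open>auto simp: distrib_left[symmetric] intro: mult_left_mono\<close>)
  also have "\<dots> = (\<Sum>t\<in>W. \<Sum>a\<in>{1..NN}. A1 x u t a * (\<Sum>b\<in>{1..NN}. D t a b))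
                 + (\<Sum>t\<in>W. \<Sum>b\<in>{1..NN}. B2 x u t b * (\<Sum>a\<in>{1..NN}. D t a b))"
  proof -
    have "(\<Sum>a\<in>{1..NN}. \<Sum>b\<in>{1..NN}. \<Sum>t\<in>W. D t a b * A1 x u t a) = (\<Sum>t\<in>W. \<Sum>a\<in>{1..NN}. A1 x u t a * (\<Sum>b\<in>{1..NN}. D t a b))"
      by (simp add: sum_distrib_left sum.swap[of _ W] sum.swap[of _ "{1..NN}" W] mult.commute)
    moreover have "(\<Sum>a\<in>{1..NN}. \<Sum>b\<in>{1..NN}. \<Sum>t\<in>W. D t a b * B2 x u t b) = (\<Sum>t\<in>W. \<Sum>b\<in>{1..NN}. B2 x u t b * (\<Sum>a\<in>{1..NN}. D t a b))"
    proof -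
      have "(\<Sum>a\<in>{1..NN}. \<Sum>b\<in>{1..NN}. \<Sum>t\<in>W. D t a b * B2 x u t b) = (\<Sum>b\<in>{1..NN}. \<Sum>a\<in>{1..NN}. \<Sum>t\<in>W. D t a b * B2 x u t b)"
        by (rule sum.swap)
      then show ?thesis
        by (simp add: sum_distrib_left sum.swap[of _ W] sum.swap[of _ "{1..NN}" W] mult.commute)
    qed
    ultimately show ?thesis by (simp add: sum.distrib)
  qed
  also have "\<dots> \<le> (\<Sum>t\<in>W. \<Sum>a\<in>{1..NN}. A1 x u t a * r) + (\<Sum>t\<in>W. \<Sum>b\<in>{1..NN}. B2 x u t b * r)"
    by (intro add_mono sum_mono mult_left_mono row col A1_nonneg B2_nonneg) auto
  also have "\<dots> = r * ((\<Sum>t\<in>W. \<Sum>a\<in>{1..NN}. A1 x u t a) + (\<Sum>t\<in>W. \<Sum>b\<in>{1..NN}. B2 x u t b))"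
    by (simp add: sum_distrib_left distrib_left mult.commute)
  also have "\<dots> \<le> r * (real h + real h)"
    by (intro mult_left_mono add_mono sumA sumB W r0)
  also have "\<dots> \<le> 1" using hr by (simp add: algebra_simps)
  finally show ?thesis .
qed

lemma Rt_nonneg: "0 \<le> Rt a b t P" unfolding Rt_def by (intro sum_nonneg) simp

lemma Rt_supp: "Rt a b t P \<noteq> 0 \<Longrightarrow> \<exists>\<delta>\<in>V. P = pth a b t \<delta>"
proof (rule ccontr)
  assume "Rt a b t P \<noteq> 0" "\<not> (\<exists>\<delta>\<in>V. P = pth a b t \<delta>)"
  then show False unfolding Rt_def by (auto intro!: sum.neutral)
qed

definition Wd :: "int \<Rightarrow> int set" where "Wd u = {u - int (3*h*m) .. u}"

lemma finite_Wd: "finite (Wd u)" unfolding Wd_def by simp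

lemma window:
  assumes a: "a \<in> {1..NN}" and b: "b \<in> {1..NN}" and \<delta>: "\<delta> \<in> V"
    and e: "(x, u, True) \<in> path_edges (h*m) sig (pth a b t \<delta>)"
  shows "t \<in> Wd u"
proof -
  have "int h * 1 \<le> int h * int m" using m1 by (intro mult_left_mono) auto
  then have hm: "int h \<le> int h * int m" by simp
  have a1: "int h * (R0 t + int m) \<le> t + int h + int h * int m" using hR0(2)[of t] by (simp add: algebra_simps)
  have a2: "int h * (R0 t + 2 * int m) \<le> t + int h + 2 * (int h * int m)" using hR0(2)[of t] by (simp add: algebra_simps)
  have "t < u \<and> u < t + 3 * (int h * int m)"
    using pth_edge[OF a b \<delta> e]
  proof
    assume "u = u1 t \<delta> (dimof u) \<and> x = pos1 a t \<delta> u"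
    then have "u = u1 t \<delta> (dimof u)" by simp
    then show ?thesis using u1_bounds[where d="dimof u" and t=t and \<delta>=\<delta>, OF dimof_lt] a1 hm by auto
  next
    assume "u = u2 t (dprime a b \<delta>) (dimof u) \<and> x = pos2 b t (dprime a b \<delta>) u"
    then have "u = u2 t (dprime a b \<delta>) (dimof u)" by simp
    then show ?thesis using u2_bounds(2)[where d="dimof u" and t=t and \<delta>="dprime a b \<delta>", OF dimof_lt]
      u1_lt_u2[where d="dimof u" and t=t and \<delta>=\<delta> and \<delta>'="dprime a b \<delta>" and d'="dimof u", OF dimof_lt]
      u1_bounds(1)[where d="dimof u" and t=t and \<delta>=\<delta>, OF dimof_lt] a2 hm by auto
  qed
  then show ?thesis unfolding Wd_def by auto
qed

lemma card_V: "card V = NN" by (simp add: card_PiE)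

lemma pth_in_paths: "a \<in> {1..NN} \<Longrightarrow> b \<in> {1..NN} \<Longrightarrow> \<delta> \<in> V \<Longrightarrow> pth a b t \<delta> \<in> paths_abt (h*m) sig a b t"
  unfolding paths_abt_def pth_def perm_at_sig using pth_end by simp

lemma R0_shift: "R0 (t + int (h*m)) = R0 t + int m"
  using h1 unfolding R0_def by simp

lemma mod_minus_m: "(z - int m) mod int m = z mod int m"
  by (rule minus_mod_self2)

lemma u1_shift: "u1 (t + int (h*m)) \<delta> d = u1 t \<delta> d + int (h*m)"
proof -
  have "(int (\<delta> d) - (R0 t + int m)) mod int m = (int (\<delta> d) - R0 t) mod int m"
    using mod_minus_m[of "int (\<delta> d) - R0 t"] by (simp add: algebra_simps)
  then show ?thesis unfolding u1_def rho1_def R0_shift by (simp add: algebra_simps)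
qed
lemma u2_shift: "u2 (t + int (h*m)) \<delta> d = u2 t \<delta> d + int (h*m)"
proof -
  have "(int (\<delta> d) - (R0 t + int m) - int m) mod int m = (int (\<delta> d) - R0 t - int m) mod int m"
    using mod_minus_m[of "int (\<delta> d) - R0 t - int m"] by (simp add: algebra_simps)
  then show ?thesis unfolding u2_def rho2_def R0_shift by (simp add: algebra_simps)
qed

lemma bl_shift: "bl (t + int (h*m)) \<delta> \<delta>' = bl t \<delta> \<delta>'"
proof -
  have "len (t + int (h*m)) = len t" unfolding len_def R0_shift by (simp add: algebra_simps)
  moreover have "(t + int (h*m) + int j \<in> Hset (t + int (h*m)) \<delta> \<delta>') = (t + int j \<in> Hset t \<delta> \<delta>')" for j
    unfolding Hset_def u1_shift u2_shift by auto
  ultimately show ?thesis unfolding bl_def by simp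
qed

lemma pth_shift: "pth a b (t + int (h*m)) \<delta> = shift_path (int (h*m)) (pth a b t \<delta>)"
  unfolding pth_def shift_path_def bl_shift by simp

lemma shift_inj: "shift_path d P = shift_path d Q \<longleftrightarrow> P = Q"
  unfolding shift_path_def by (cases P; cases Q) auto

lemma Rt_shift: "Rt a b (t + int (h*m)) (shift_path (int (h*m)) P) = Rt a b t P"
  unfolding Rt_def pth_shift shift_inj ..

lemma Rt_total: assumes a: "a \<in> {1..NN}" and b: "b \<in> {1..NN}"
  shows "(\<Sum>\<^sub>\<infinity>P\<in>UNIV. ennreal (Rt a b t P)) = 1"
proof -
  let ?I = "pth a b t ` V"
  have fI: "finite ?I" using finite_V by simp
  have "(\<Sum>\<^sub>\<infinity>P\<in>UNIV. ennreal (Rt a b t P)) = (\<Sum>\<^sub>\<infinity>P\<in>?I. ennreal (Rt a b t P))"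
  proof (rule infsum_cong_neutral)
    fix P assume "P \<in> UNIV - ?I"
    then have "\<not> (\<exists>\<delta>\<in>V. P = pth a b t \<delta>)" by auto
    then have "Rt a b t P = 0" using Rt_supp by blast
    then show "ennreal (Rt a b t P) = 0" by simp
  qed auto
  also have "\<dots> = (\<Sum>P\<in>?I. ennreal (Rt a b t P))" using fI by simp
  also have "\<dots> = ennreal (\<Sum>P\<in>?I. Rt a b t P)" using Rt_nonneg by simp
  also have "(\<Sum>P\<in>?I. Rt a b t P) = (\<Sum>\<delta>\<in>V. \<Sum>P\<in>?I. if pth a b t \<delta> = P then 1 / real NN else 0)"
    unfolding Rt_def by (rule sum.swap)
  also have "\<dots> = (\<Sum>\<delta>\<in>V. 1 / real NN)" using fI by (simp add: sum.delta)
  also have "\<dots> = 1" using card_V m1 by simp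
  finally show ?thesis by simp
qed

lemma routing: "routing_scheme NN (h*m) sig Rt"
  unfolding routing_scheme_def
proof (intro ballI allI conjI impI)
  fix a b t P assume a: "a \<in> {1..NN}" and b: "b \<in> {1..NN}"
  show "0 \<le> Rt a b t P" by (rule Rt_nonneg)
  show "(\<Sum>\<^sub>\<infinity>P\<in>UNIV. ennreal (Rt a b t P)) = 1" by (rule Rt_total[OF a b])
  show "Rt a b (t + int (h*m)) (shift_path (int (h*m)) P) = Rt a b t P" by (rule Rt_shift)
next
  fix a b t P assume a: "a \<in> {1..NN}" and b: "b \<in> {1..NN}" and P: "P \<notin> paths_abt (h*m) sig a b t"
  show "Rt a b t P = 0"
  proof (rule ccontr)
    assume "Rt a b t P \<noteq> 0"
    then obtain \<delta> where "\<delta> \<in> V" "P = pth a b t \<delta>" using Rt_supp by blast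
    then show False using P pth_in_paths[OF a b] by simp
  qed
qed

lemma sum_triple: "(\<Sum>k\<in>A \<times> B \<times> C. q k) = (\<Sum>a\<in>A. \<Sum>b\<in>B. \<Sum>c\<in>C. q (a, b, c))"
  by (simp add: sum.cartesian_product)

lemma load_le:
  assumes req: "requests_at_most NN D r" and r0: "0 \<le> r" and hr: "2 * real h * r \<le> 1"
  shows "load (h*m) sig NN Rt D (x, u, True) \<le> 1"
proof -
  define E where "E = {P. (x, u, True) \<in> path_edges (h*m) sig P}"
  define W where "W = Wd u"
  define Kp where "Kp = {1..NN} \<times> {1..NN} \<times> W"
  define F where "F = (\<lambda>(a, b, t, \<delta>). pth a b t \<delta>) ` ({1..NN} \<times> {1..NN} \<times> W \<times> V)"
  have fW: "finite W" unfolding W_def by (rule finite_Wd)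
  have fF: "finite F" unfolding F_def using fW finite_V by simp
  have fK: "finite Kp" unfolding Kp_def using fW by simp
  have Dn: "\<And>t a b. a \<in> {1..NN} \<Longrightarrow> b \<in> {1..NN} \<Longrightarrow> 0 \<le> D t a b"
    using req unfolding requests_at_most_def by blast
  have row: "\<And>t a. a \<in> {1..NN} \<Longrightarrow> (\<Sum>b\<in>{1..NN}. D t a b) \<le> r"
    using req unfolding requests_at_most_def by blast
  have col: "\<And>t b. b \<in> {1..NN} \<Longrightarrow> (\<Sum>a\<in>{1..NN}. D t a b) \<le> r"
    using req unfolding requests_at_most_def by blast
  have z: "t \<in> W \<and> P \<in> F" if P: "P \<in> E" and a: "a \<in> {1..NN}" and b: "b \<in> {1..NN}"
    and nz: "Rt a b t P \<noteq> 0" for P a b t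
  proof -
    obtain \<delta> where \<delta>: "\<delta> \<in> V" and Pd: "P = pth a b t \<delta>" using Rt_supp[OF nz] by blast
    have tW: "t \<in> W" using window[OF a b \<delta>] P Pd unfolding E_def W_def by simp
    have "P \<in> F" unfolding F_def Pd using a b tW \<delta> by (intro image_eqI[of _ _ "(a, b, t, \<delta>)"]) auto
    then show ?thesis using tW by simp
  qed
  let ?f = "\<lambda>P. \<lambda>(a, b, t). ennreal (D t a b * Rt a b t P)"
  have IF_eq: "induced_flow NN Rt D P = (\<Sum>k\<in>Kp. ?f P k)" if P: "P \<in> E" for P
  proof -
    have "induced_flow NN Rt D P = (\<Sum>\<^sub>\<infinity>k\<in>{1..NN} \<times> {1..NN} \<times> (UNIV :: int set). ?f P k)"
      unfolding induced_flow_def ..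
    also have "\<dots> = (\<Sum>\<^sub>\<infinity>k\<in>Kp. ?f P k)"
    proof (rule infsum_cong_neutral)
      fix k assume k: "k \<in> {1..NN} \<times> {1..NN} \<times> (UNIV :: int set) - Kp"
      obtain a b t where kk: "k = (a, b, t)" by (cases k) auto
      have a: "a \<in> {1..NN}" and b: "b \<in> {1..NN}" and t: "t \<notin> W" using k unfolding kk Kp_def by auto
      have "Rt a b t P = 0" using z[OF P a b] t by blast
      then show "?f P k = 0" unfolding kk by simp
    qed (auto simp: Kp_def)
    also have "\<dots> = (\<Sum>k\<in>Kp. ?f P k)" using fK by simp
    finally show ?thesis .
  qed
  have "load (h*m) sig NN Rt D (x, u, True) = (\<Sum>\<^sub>\<infinity>P\<in>E. induced_flow NN Rt D P)"
    unfolding load_def E_def ..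
  also have "\<dots> = (\<Sum>\<^sub>\<infinity>P\<in>E \<inter> F. induced_flow NN Rt D P)"
  proof (rule infsum_cong_neutral)
    fix P assume P: "P \<in> E - E \<inter> F"
    have "(\<Sum>k\<in>Kp. ?f P k) = 0"
    proof (rule sum.neutral, rule ballI)
      fix k assume k: "k \<in> Kp"
      obtain a b t where kk: "k = (a, b, t)" by (cases k) auto
      have a: "a \<in> {1..NN}" and b: "b \<in> {1..NN}" using k unfolding kk Kp_def by auto
      have "Rt a b t P = 0" using z[of P a b t] P a b by blast
      then show "?f P k = 0" unfolding kk by simp
    qed
    then show "induced_flow NN Rt D P = 0" using IF_eq P by simp
  qed auto
  also have "\<dots> = (\<Sum>P\<in>E \<inter> F. induced_flow NN Rt D P)" using fF by simp
  also have "\<dots> = (\<Sum>P\<in>E \<inter> F. \<Sum>k\<in>Kp. ?f P k)" using IF_eq by simp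
  also have "\<dots> = (\<Sum>P\<in>E \<inter> F. ennreal (\<Sum>k\<in>Kp. (\<lambda>(a, b, t). D t a b * Rt a b t P) k))"
  proof (rule sum.cong[OF refl])
    fix P
    have "(\<Sum>k\<in>Kp. ?f P k) = (\<Sum>k\<in>Kp. ennreal ((\<lambda>(a, b, t). D t a b * Rt a b t P) k))"
      by (rule sum.cong) (auto split: prod.splits)
    also have "\<dots> = ennreal (\<Sum>k\<in>Kp. (\<lambda>(a, b, t). D t a b * Rt a b t P) k)"
      by (rule sum_ennreal) (auto simp: Kp_def intro!: mult_nonneg_nonneg Dn Rt_nonneg)
    finally show "(\<Sum>k\<in>Kp. ?f P k) = ennreal (\<Sum>k\<in>Kp. (\<lambda>(a, b, t). D t a b * Rt a b t P) k)" .
  qed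
  also have "\<dots> = ennreal (\<Sum>P\<in>E \<inter> F. \<Sum>k\<in>Kp. (\<lambda>(a, b, t). D t a b * Rt a b t P) k)"
    by (rule sum_ennreal) (auto simp: Kp_def intro!: sum_nonneg mult_nonneg_nonneg Dn Rt_nonneg)
  finally have L: "load (h*m) sig NN Rt D (x, u, True) = ennreal (\<Sum>P\<in>E \<inter> F. \<Sum>k\<in>Kp. (\<lambda>(a, b, t). D t a b * Rt a b t P) k)" .
  have "(\<Sum>P\<in>E \<inter> F. \<Sum>k\<in>Kp. (\<lambda>(a, b, t). D t a b * Rt a b t P) k)
      = (\<Sum>k\<in>Kp. (\<lambda>(a, b, t). D t a b * (\<Sum>P\<in>E \<inter> F. Rt a b t P)) k)"
    by (subst sum.swap) (auto intro!: sum.cong simp: sum_distrib_left split: prod.splits)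
  also have "\<dots> = (\<Sum>a\<in>{1..NN}. \<Sum>b\<in>{1..NN}. \<Sum>t\<in>W. D t a b * (\<Sum>P\<in>E \<inter> F. Rt a b t P))"
    unfolding Kp_def sum_triple by simp
  also have "\<dots> \<le> 1"
  proof (rule real_bound[OF Dn row col fW r0 hr])
    fix a b t assume a: "a \<in> {1..NN}" and b: "b \<in> {1..NN}"
    show "(\<Sum>P\<in>E \<inter> F. Rt a b t P) \<le> A1 x u t a + B2 x u t b"
      by (rule inner_bound[OF a b]) (use fF E_def in auto)
  qed
  finally have "(\<Sum>P\<in>E \<inter> F. \<Sum>k\<in>Kp. (\<lambda>(a, b, t). D t a b * Rt a b t P) k) \<le> 1" .
  then show ?thesis unfolding L using ennreal_leI by fastforce
qed

lemma len_le: "real (len t) \<le> real (3*h*m)"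
proof -
  have "int h \<le> int h * int m" using m1 by (metis mult.right_neutral mult_left_mono of_nat_0_le_iff of_nat_1 of_nat_le_iff)
  then have "int (len t) \<le> int (3*h*m)" using len_eq[of t] hR0(2)[of t] by (simp add: algebra_simps)
  then show ?thesis by (metis of_int_of_nat_eq of_int_le_iff)
qed

lemma good: assumes r0: "0 \<le> r" and hr: "2 * real h * r \<le> 1" and L: "real (3*h*m) \<le> L"
  shows "good_ORN NN r L"
  unfolding good_ORN_def
proof (intro exI conjI)
  show "schedule NN (h*m) sig" unfolding schedule_def sig_def using h1 m1 step_permutes by simp
  show "routing_scheme NN (h*m) sig Rt" by (rule routing)
  show "guarantees_throughput NN (h*m) sig Rt r" unfolding guarantees_throughput_def
    using load_le[OF _ r0 hr] by blast
  show "max_latency_le NN Rt L" unfolding max_latency_le_def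
  proof (intro ballI allI impI)
    fix a b t P assume "a \<in> {1..NN}" "b \<in> {1..NN}" "0 < Rt a b t P"
    then have "Rt a b t P \<noteq> 0" by simp
    then obtain \<delta> where "P = pth a b t \<delta>" using Rt_supp by blast
    then have "latency P = len t" unfolding latency_def pth_def bl_def by simp
    then show "real (latency P) \<le> L" using len_le[of t] L by simp
  qed
qed

end

lemma exists_good:
  fixes h m :: nat and r L :: real
  assumes h1: "1 \<le> h" and m1: "1 \<le> m" and r0: "0 \<le> r" and hr: "2 * real h * r \<le> 1"
    and L: "real (3*h*m) \<le> L"
  shows "good_ORN (m^h) r L"
proof -
  let ?V = "PiE {..<h} (\<lambda>_. {..<m}) :: (nat \<Rightarrow> nat) set"
  have "card ?V = m^h" by (simp add: card_PiE)
  then obtain f where bij: "bij_betw f ?V {1..m^h}"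
    using finite_same_card_bij[of ?V "{1..m^h}"] by (auto simp: finite_PiE)
  define g where "g = inv_into ?V f"
  have inj: "inj_on f ?V" using bij by (simp add: bij_betw_def)
  have img: "f ` ?V = {1..m^h}" using bij by (simp add: bij_betw_def)
  interpret orn h m f g
  proof
    show "1 \<le> h" "1 \<le> m" by fact+
    fix v assume v: "v \<in> ?V"
    show "f v \<in> {1..m^h} \<and> g (f v) = v" using v img inj unfolding g_def by auto
  next
    fix i assume i: "i \<in> {1..m^h}"
    then have "i \<in> f ` ?V" using img by simp
    then show "g i \<in> ?V \<and> f (g i) = i" unfolding g_def
      by (simp add: inv_into_into f_inv_into_f)
  qed
  show ?thesis by (rule good[OF r0 hr L])
qed

theorem theorem4:
  fixes r :: real
  assumes "0 < r" and "r \<le> 1 / 2"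
  shows "\<exists>C > 0. infinite {N :: nat. good_ORN N r (C * Lstar r N)}"
proof -
  define hi where "hi = \<lfloor>1 / (2 * r)\<rfloor>"
  define h where "h = nat hi"
  define \<epsilon> where "\<epsilon> = real_of_int hi + 1 - 1 / (2 * r)"
  have q1: "1 \<le> 1 / (2 * r)" using assms by (simp add: field_simps)
  have hi1: "1 \<le> hi" unfolding hi_def using q1 by (simp add: le_floor_iff)
  have hh: "real h = real_of_int hi" unfolding h_def using hi1 by simp
  have h1: "1 \<le> h" unfolding h_def using hi1 by simp
  have fl: "real_of_int hi \<le> 1 / (2 * r)" "1 / (2 * r) < real_of_int hi + 1" unfolding hi_def
    by (simp_all add: floor_le_iff)
  have e0: "0 < \<epsilon>" unfolding \<epsilon>_def using fl by simp
  have e1: "\<epsilon> \<le> 1" unfolding \<epsilon>_def using fl by simp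
  have hr: "2 * real h * r \<le> 1"
  proof -
    have "real h \<le> 1 / (2 * r)" using hh fl by simp
    then have "real h * (2 * r) \<le> 1" using assms by (simp add: field_simps)
    then show ?thesis by (simp add: algebra_simps)
  qed
  define C where "C = 3 / \<epsilon>"
  have C0: "C > 0" unfolding C_def using e0 by simp
  have key: "real (3*h*m) \<le> C * Lstar r (m^h)" if m1: "1 \<le> m" for m :: nat
  proof -
    have Ls: "Lstar r (m^h) = real h * (real (m^h) powr (1 / (real h + 1)) + (\<epsilon> * real (m^h)) powr (1 / real h))"
      unfolding Lstar_def Let_def \<epsilon>_def hh[symmetric] hi_def[symmetric] by simp
    have mp: "0 < real m" using m1 by simp
    have "(\<epsilon> * real (m^h)) powr (1 / real h) = \<epsilon> powr (1 / real h) * (real m ^ h) powr (1 / real h)"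
      using e0 mp by (simp add: powr_mult)
    also have "(real m ^ h) powr (1 / real h) = real m"
    proof -
      have "(real m ^ h) = real m powr real h" using mp by (simp add: powr_realpow)
      then have "(real m ^ h) powr (1 / real h) = real m powr (real h * (1 / real h))"
        by (simp add: powr_powr)
      also have "\<dots> = real m" using h1 mp by simp
      finally show ?thesis .
    qed
    finally have E: "(\<epsilon> * real (m^h)) powr (1 / real h) = \<epsilon> powr (1 / real h) * real m" .
    have "\<epsilon> = \<epsilon> powr 1" using e0 by simp
    also have "\<dots> \<le> \<epsilon> powr (1 / real h)" using h1 e0 e1 by (intro powr_mono') auto
    finally have ep: "\<epsilon> \<le> \<epsilon> powr (1 / real h)" .
    have "real h * (\<epsilon> * real m) \<le> real h * (\<epsilon> powr (1 / real h) * real m)"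
      using ep mp by (intro mult_left_mono mult_right_mono) auto
    also have "\<dots> \<le> Lstar r (m^h)" unfolding Ls E
      by (intro mult_left_mono) auto
    finally have "real h * \<epsilon> * real m \<le> Lstar r (m^h)" by (simp add: algebra_simps)
    then have "C * (real h * \<epsilon> * real m) \<le> C * Lstar r (m^h)" using C0 by (intro mult_left_mono) auto
    moreover have "C * (real h * \<epsilon> * real m) = real (3*h*m)" unfolding C_def using e0 by simp
    ultimately show ?thesis by simp
  qed
  have "infinite {N :: nat. good_ORN N r (C * Lstar r N)}"
    unfolding infinite_nat_iff_unbounded_le
  proof
    fix M :: nat
    let ?N = "(M + 1)^h"
    have "M + 1 \<le> ?N" using h1 by (intro self_le_power) auto
    moreover have "good_ORN ?N r (C * Lstar r ?N)"
      by (rule exists_good[OF h1 _ _ hr key]) (use assms in auto)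
    ultimately show "\<exists>N\<ge>M. N \<in> {N. good_ORN N r (C * Lstar r N)}" by (intro exI[of _ ?N]) auto
  qed
  then show ?thesis using C0 by blast
qed

end
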